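(* For every $t\in\mathbb{N}$ there exists $n_0(t)$ such that for all $n\ge n_0(t)$ the following holds. Let $\mathcal{F}\subseteq\mathcal{M}_{2n}$ be a $t$-intersecting family and $T^*=\{\{1,2\},\{3,4\},\dots,\{2t-1,2t\}\}$. For any set $T$ of $t$ pairwise disjoint edges of $K_{2n}$ such that $T\cap T^*=\emptyset$, $|V(T)\cap\{2i-1,2i\}|\ge1$ for all $i\in[t]$, and $T\subseteq\Delta([2t])$, we have \[|\mathcal{F}\!\downarrow_{T^*}|\cdot|\mathcal{F}\!\downarrow_T|\le\big((2(n-2t)-1)!!\big)^2.\]
   Context: $\mathcal{M}_{2n}$ is the set of perfect matchings of $K_{2n}$ on $[2n]$. A family $\mathcal{F}$ is $t$-intersecting if $|m\cap m'|\ge t$ for all $m,m'\in\mathcal{F}$. For a set $S$ of disjoint edges, $\mathcal{F}\!\downarrow_S=\{m\in\mathcal{F}:S\subseteq m\}$ and $V(S)$ is the set of endpoints of edges in $S$. For $V'\subseteq[2n]$, $\Delta(V')$ is the set of edges of $K_{2n}$ with at least one endpoint in $V'$. $(2k-1)!!=1\cdot3\cdots(2k-1)$. *)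

theory Defs
  imports Main
begin

definition edges_K :: "nat \<Rightarrow> nat set set" where
  "edges_K n = {e. e \<subseteq> {1..2*n} \<and> card e = 2}"

definition pairwise_disjoint_edges :: "nat set set \<Rightarrow> bool" where
  "pairwise_disjoint_edges S \<longleftrightarrow> (\<forall>e\<in>S. \<forall>f\<in>S. e \<noteq> f \<longrightarrow> e \<inter> f = {})"

definition perfect_matchings :: "nat \<Rightarrow> nat set set set" where
  "perfect_matchings n = {m. m \<subseteq> edges_K n \<and> pairwise_disjoint_edges m \<and> \<Union>m = {1..2*n}}"

definition t_intersecting :: "nat \<Rightarrow> nat set set set \<Rightarrow> bool" where
  "t_intersecting t F \<longleftrightarrow> (\<forall>m\<in>F. \<forall>m'\<in>F. card (m \<inter> m') \<ge> t)"

definition restrict_fam :: "nat set set set \<Rightarrow> nat set set \<Rightarrow> nat set set set" where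
  "restrict_fam F S = {m\<in>F. S \<subseteq> m}"

definition verts :: "nat set set \<Rightarrow> nat set" where
  "verts S = \<Union>S"

definition Delta :: "nat \<Rightarrow> nat set \<Rightarrow> nat set set" where
  "Delta n V' = {e\<in>edges_K n. e \<inter> V' \<noteq> {}}"

definition Tstar :: "nat \<Rightarrow> nat set set" where
  "Tstar t = {{2*i-1, 2*i} | i. i \<in> {1..t}}"

text \<open>odd_dfact k = (2k-1)!! = 1*3*...*(2k-1).\<close>
definition odd_dfact :: "nat \<Rightarrow> nat" where
  "odd_dfact k = (\<Prod>i\<in>{1..k}. 2*i - 1)"

end

theory Submission
  imports Defs "HOL-Real_Asymp.Real_Asymp"
begin

lemma odd_dfact_0[simp]: "odd_dfact 0 = 1"
  by (simp add: odd_dfact_def)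

lemma odd_dfact_Suc: "odd_dfact (Suc k) = (2*k+1) * odd_dfact k"
  unfolding odd_dfact_def by (simp add: prod.cl_ivl_Suc mult.commute)

lemma odd_dfact_pos: "odd_dfact k > 0"
  by (induction k) (simp_all add: odd_dfact_Suc)

lemma odd_dfact_mono: "j \<le> k \<Longrightarrow> odd_dfact j \<le> odd_dfact k"
proof (induction k)
  case 0 then show ?case by simp
next
  case (Suc k)
  show ?case
  proof (cases "j = Suc k")
    case True then show ?thesis by simp
  next
    case False
    then have "odd_dfact j \<le> odd_dfact k" using Suc by simp
    also have "\<dots> \<le> odd_dfact (Suc k)" by (simp add: odd_dfact_Suc)
    finally show ?thesis .
  qed
qed

lemma odd_dfact_lower: "(2*k+1)^j * odd_dfact k \<le> odd_dfact (k + j)"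
proof (induction j)
  case 0 then show ?case by simp
next
  case (Suc j)
  have "(2*k+1)^Suc j * odd_dfact k = (2*k+1) * ((2*k+1)^j * odd_dfact k)" by (simp add: algebra_simps)
  also have "\<dots> \<le> (2*(k+j)+1) * odd_dfact (k+j)"
    using Suc by (intro mult_mono) auto
  also have "\<dots> = odd_dfact (k + Suc j)" by (simp add: odd_dfact_Suc)
  finally show ?case .
qed

lemma odd_dfact_upper: "odd_dfact (k + j) \<le> (2*(k+j))^j * odd_dfact k"
proof (induction j)
  case 0 then show ?case by simp
next
  case (Suc j)
  have "odd_dfact (k + Suc j) = (2*(k+j)+1) * odd_dfact (k+j)" by (simp add: odd_dfact_Suc)
  also have "\<dots> \<le> (2*(k+Suc j)) * ((2*(k+j))^j * odd_dfact k)"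
    using Suc by (intro mult_mono) auto
  also have "\<dots> \<le> (2*(k+Suc j)) * ((2*(k+Suc j))^j * odd_dfact k)"
    by (intro mult_mono power_mono) auto
  also have "\<dots> = (2*(k+Suc j))^Suc j * odd_dfact k" by (simp only: power_Suc mult.assoc)
  finally show ?case .
qed

definition pm_on :: "nat set \<Rightarrow> nat set set set" where
  "pm_on V = {m. (\<forall>e\<in>m. e \<subseteq> V \<and> card e = 2) \<and> pairwise_disjoint_edges m \<and> \<Union>m = V}"

lemma pm_on_finite: "finite V \<Longrightarrow> finite (pm_on V)"
  by (rule finite_subset[of _ "Pow (Pow V)"]) (auto simp: pm_on_def)

lemma card2_ex: "card e = 2 \<Longrightarrow> v \<in> e \<Longrightarrow> \<exists>w. w \<noteq> v \<and> e = {v, w}"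
  by (metis card_2_iff insert_commute insert_iff singletonD)

lemma pm_on_card: "finite V \<Longrightarrow> card V = 2*k \<Longrightarrow> card (pm_on V) \<le> odd_dfact k"
proof (induction k arbitrary: V)
  case 0
  then have "V = {}" by simp
  then have "pm_on V \<subseteq> {{}}"
    by (auto simp: pm_on_def)
  then have "card (pm_on V) \<le> 1"
    using card_mono[of "{{}}" "pm_on V"] by simp
  then show ?case by simp
next
  case (Suc k)
  then obtain v where v: "v \<in> V" by fastforce
  define W where "W = V - {v}"
  have finW: "finite W" using Suc.prems W_def by simp
  have cW: "card W = 2*k+1" using Suc.prems v W_def by simp
  have sub: "pm_on V \<subseteq> (\<Union>w\<in>W. insert {v,w} ` pm_on (V - {v,w}))"
  proof
    fix m assume m: "m \<in> pm_on V"
    then have "v \<in> \<Union>m" using v by (simp add: pm_on_def)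
    then obtain e where e: "e \<in> m" "v \<in> e" by blast
    have eV: "e \<subseteq> V" "card e = 2" using m e by (auto simp: pm_on_def)
    then obtain w where w: "w \<noteq> v" "e = {v,w}" using card2_ex[OF eV(2) e(2)] by blast
    have wW: "w \<in> W" using w eV W_def by auto
    have mV: "\<And>f. f \<in> m \<Longrightarrow> f \<subseteq> V \<and> card f = 2" using m unfolding pm_on_def by blast
    have dis: "\<And>f. f \<in> m \<Longrightarrow> f \<noteq> e \<Longrightarrow> f \<inter> e = {}"
      using m e unfolding pm_on_def pairwise_disjoint_edges_def by blast
    have Um: "\<Union>m = V" using m unfolding pm_on_def by blast
    have "m - {e} \<in> pm_on (V - {v,w})"
    proof -
      have "\<forall>f\<in>m - {e}. f \<subseteq> V - {v,w} \<and> card f = 2"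
      proof
        fix f assume f: "f \<in> m - {e}"
        then have "f \<inter> {v,w} = {}" using dis w by blast
        then show "f \<subseteq> V - {v,w} \<and> card f = 2" using mV f by blast
      qed
      moreover have "pairwise_disjoint_edges (m - {e})"
        using m unfolding pm_on_def pairwise_disjoint_edges_def by blast
      moreover have "\<Union>(m - {e}) = V - {v,w}"
      proof
        show "\<Union>(m - {e}) \<subseteq> V - {v,w}" using calculation(1) by blast
        show "V - {v,w} \<subseteq> \<Union>(m - {e})"
        proof
          fix x assume x: "x \<in> V - {v,w}"
          then have "x \<in> \<Union>m" using Um by simp
          then obtain f where "f \<in> m" "x \<in> f" by blast
          then show "x \<in> \<Union>(m - {e})" using x w by auto
        qed
      qed
      ultimately show ?thesis unfolding pm_on_def by blast
    qed
    moreover have "m = insert {v,w} (m - {e})" using e w by auto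
    ultimately show "m \<in> (\<Union>w\<in>W. insert {v,w} ` pm_on (V - {v,w}))" using wW by blast
  qed
  have "card (pm_on V) \<le> card (\<Union>w\<in>W. insert {v,w} ` pm_on (V - {v,w}))"
    using sub finW Suc.prems(1) by (intro card_mono) (auto intro: pm_on_finite)
  also have "\<dots> \<le> (\<Sum>w\<in>W. card (insert {v,w} ` pm_on (V - {v,w})))"
    using finW by (rule card_UN_le)
  also have "\<dots> \<le> (\<Sum>w\<in>W. odd_dfact k)"
  proof (rule sum_mono)
    fix w assume w: "w \<in> W"
    have c: "card (V - {v,w}) = 2*k"
      using w W_def v Suc.prems by (auto simp: card_Diff_subset)
    have "card (insert {v,w} ` pm_on (V - {v,w})) \<le> card (pm_on (V - {v,w}))"
      by (rule card_image_le) (simp add: Suc.prems pm_on_finite)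
    also have "\<dots> \<le> odd_dfact k" using Suc.IH[of "V - {v,w}"] c Suc.prems by simp
    finally show "card (insert {v,w} ` pm_on (V - {v,w})) \<le> odd_dfact k" .
  qed
  also have "\<dots> = (2*k+1) * odd_dfact k" using cW by simp
  also have "\<dots> = odd_dfact (Suc k)" by (simp add: odd_dfact_Suc)
  finally show ?case .
qed

lemma PM_D:
  assumes "m \<in> perfect_matchings n"
  shows "\<And>e. e \<in> m \<Longrightarrow> e \<subseteq> {1..2*n} \<and> card e = 2"
    and "\<And>e f. e \<in> m \<Longrightarrow> f \<in> m \<Longrightarrow> e \<noteq> f \<Longrightarrow> e \<inter> f = {}"
    and "\<Union>m = {1..2*n}"
  using assms unfolding perfect_matchings_def edges_K_def pairwise_disjoint_edges_def by blast+

lemma finite_PM: "finite (perfect_matchings n)"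
  by (rule finite_subset[of _ "Pow (Pow {1..2*n})"])
     (auto simp: perfect_matchings_def edges_K_def)

lemma PM_finite_m: "m \<in> perfect_matchings n \<Longrightarrow> finite m"
  by (rule finite_subset[of _ "Pow {1..2*n}"]) (use PM_D(1) in blast, simp)

lemma PM_card_Union:
  assumes m: "m \<in> perfect_matchings n" and D: "D \<subseteq> m"
  shows "card (\<Union>D) = 2 * card D"
proof -
  have "pairwise disjnt D"
    using PM_D(2)[OF m] D unfolding pairwise_def disjnt_def by blast
  moreover have "\<And>e. e \<in> D \<Longrightarrow> finite e" using PM_D(1)[OF m] D
    by (metis card.infinite subsetD zero_neq_numeral)
  ultimately have "card (\<Union>D) = sum card D" by (rule card_Union_disjoint)
  also have "\<dots> = sum (\<lambda>_. 2) D" using PM_D(1)[OF m] D by (intro sum.cong) auto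
  also have "\<dots> = 2 * card D" by simp
  finally show ?thesis .
qed

lemma PM_card: "m \<in> perfect_matchings n \<Longrightarrow> card m = n"
  using PM_card_Union[of m n m] PM_D(3)[of m n] by simp

lemma PM_count: "card {m \<in> perfect_matchings n. Z \<subseteq> m} \<le> odd_dfact (n - card Z)"
proof (cases "{m \<in> perfect_matchings n. Z \<subseteq> m} = {}")
  case True then show ?thesis by (metis card.empty le0)
next
  case False
  then obtain m0 where m0: "m0 \<in> perfect_matchings n" "Z \<subseteq> m0" by blast
  have cW: "card (\<Union>Z) = 2 * card Z" by (rule PM_card_Union[OF m0(1) m0(2)])
  have WS: "\<Union>Z \<subseteq> {1..2*n}" using PM_D(3)[OF m0(1)] m0(2) by blast
  define V where "V = {1..2*n} - \<Union>Z"
  have cV: "card V = 2 * (n - card Z)"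
    using WS cW unfolding V_def by (simp add: card_Diff_subset finite_subset)
  have finV: "finite V" unfolding V_def by simp
  have inj: "inj_on (\<lambda>m. m - Z) {m \<in> perfect_matchings n. Z \<subseteq> m}"
    by (rule inj_onI) blast
  have img: "(\<lambda>m. m - Z) ` {m \<in> perfect_matchings n. Z \<subseteq> m} \<subseteq> pm_on V"
  proof
    fix m' assume "m' \<in> (\<lambda>m. m - Z) ` {m \<in> perfect_matchings n. Z \<subseteq> m}"
    then obtain m where m: "m \<in> perfect_matchings n" "Z \<subseteq> m" "m' = m - Z" by blast
    have 1: "\<forall>e\<in>m'. e \<subseteq> V \<and> card e = 2"
    proof
      fix e assume e: "e \<in> m'"
      have "e \<inter> \<Union>Z = {}" using PM_D(2)[OF m(1)] m e by blast
      then show "e \<subseteq> V \<and> card e = 2" using PM_D(1)[OF m(1)] m e unfolding V_def by blast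
    qed
    have 2: "pairwise_disjoint_edges m'" using PM_D(2)[OF m(1)] m(3)
      unfolding pairwise_disjoint_edges_def by blast
    have 3: "\<Union>m' = V"
    proof
      show "\<Union>m' \<subseteq> V" using 1 by blast
      show "V \<subseteq> \<Union>m'"
      proof
        fix x assume x: "x \<in> V"
        then have "x \<in> \<Union>m" using PM_D(3)[OF m(1)] unfolding V_def by blast
        then obtain e where "e \<in> m" "x \<in> e" by blast
        then show "x \<in> \<Union>m'" using x m(3) unfolding V_def by blast
      qed
    qed
    show "m' \<in> pm_on V" using 1 2 3 unfolding pm_on_def by blast
  qed
  have "card {m \<in> perfect_matchings n. Z \<subseteq> m} = card ((\<lambda>m. m - Z) ` {m \<in> perfect_matchings n. Z \<subseteq> m})"
    using inj by (simp add: card_image)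
  also have "\<dots> \<le> card (pm_on V)" using img finV by (intro card_mono pm_on_finite)
  also have "\<dots> \<le> odd_dfact (n - card Z)" using pm_on_card[OF finV cV] .
  finally show ?thesis .
qed

definition spread_ok :: "nat \<Rightarrow> nat set set \<Rightarrow> nat set set \<Rightarrow> nat set set set \<Rightarrow> bool" where
  "spread_ok n P X H \<longleftrightarrow> H \<noteq> {} \<and> (\<forall>h\<in>H. X \<subseteq> h) \<and>
     (\<forall>e. e \<notin> X \<longrightarrow> e \<notin> P \<longrightarrow> (n+1) * card {h\<in>H. e \<in> h} \<le> card H)"

definition kern :: "nat \<Rightarrow> nat \<Rightarrow> nat set set \<Rightarrow> nat set set set \<Rightarrow> nat set set \<Rightarrow> bool" where
  "kern n q P A X \<longleftrightarrow> X \<inter> P = {} \<and> card X \<le> q \<and> finite X \<and> (\<exists>H\<subseteq>A. spread_ok n P X H)"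

lemma finite_edges_K: "finite (edges_K n)"
  by (rule finite_subset[of _ "Pow {1..2*n}"]) (auto simp: edges_K_def)

lemma cover:
  assumes A: "A \<subseteq> {m \<in> perfect_matchings n. P \<subseteq> m}" and finP: "finite P"
  shows "G \<subseteq> A \<Longrightarrow> \<exists>K G'. G' \<subseteq> G \<and> card G' \<le> (n+1)^(q+1) * odd_dfact (n - (card P + q + 1))
          \<and> (\<forall>X\<in>K. kern n q P A X) \<and> G \<subseteq> (\<Union>X\<in>K. {g. X \<subseteq> g}) \<union> G'"
proof (induction "card G" arbitrary: G rule: less_induct)
  case less
  have "A \<subseteq> perfect_matchings n" using A by blast
  then have finA: "finite A" using finite_PM by (rule finite_subset)
  have finG: "finite G" by (rule finite_subset[OF less.prems finA])
  show ?case
  proof (cases "G = {}")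
    case True
    then show ?thesis by (intro exI[of _ "{}"] exI[of _ "{}"]) simp
  next
    case False
    define Dom where "Dom = {Z. Z \<subseteq> edges_K n \<and> Z \<inter> P = {} \<and> card Z \<le> q+1}"
    define \<Phi> where "\<Phi> Z = (n+1)^card Z * card {g\<in>G. Z \<subseteq> g}" for Z
    have finDom: "finite Dom" unfolding Dom_def
      by (rule finite_subset[of _ "Pow (edges_K n)"]) (auto simp: finite_edges_K)
    have emp: "{} \<in> Dom" unfolding Dom_def by simp
    define mx where "mx = Max (\<Phi> ` Dom)"
    have "mx \<in> \<Phi> ` Dom" unfolding mx_def using finDom emp by (intro Max_in) auto
    then obtain X where X: "X \<in> Dom" "\<Phi> X = mx" by blast
    have maxX: "\<And>Z. Z \<in> Dom \<Longrightarrow> \<Phi> Z \<le> \<Phi> X"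
      using X finDom unfolding mx_def by (simp add: Max_ge)
    have "X \<subseteq> edges_K n" using X(1) by (simp add: Dom_def)
    then have finX: "finite X" using finite_edges_K by (rule finite_subset)
    have XP: "X \<inter> P = {}" using X(1) unfolding Dom_def by blast
    have "\<Phi> {} = card G" unfolding \<Phi>_def by simp
    then have PhiX: "card G \<le> \<Phi> X" using maxX[OF emp] by simp
    show ?thesis
    proof (cases "card X = q + 1")
      case True
      have sub: "{g\<in>G. X \<subseteq> g} \<subseteq> {m \<in> perfect_matchings n. P \<union> X \<subseteq> m}"
        using less.prems A by blast
      have cPX: "card (P \<union> X) = card P + q + 1"
        using True XP card_Un_disjoint[OF finP finX] by (simp add: Int_commute)
      have "card {g\<in>G. X \<subseteq> g} \<le> card {m \<in> perfect_matchings n. P \<union> X \<subseteq> m}"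
        using sub by (intro card_mono) (auto intro: finite_subset[OF _ finite_PM[of n]])
      also have "\<dots> \<le> odd_dfact (n - (card P + q + 1))" using PM_count[of n "P \<union> X"] cPX by simp
      finally have "card G \<le> (n+1)^(q+1) * odd_dfact (n - (card P + q + 1))"
        using PhiX True unfolding \<Phi>_def by (metis (no_types, lifting) le_trans mult_le_mono2)
      then show ?thesis by (intro exI[of _ "{}"] exI[of _ G]) simp
    next
      case False
      then have cX: "card X \<le> q" using X(1) unfolding Dom_def by simp
      define H where "H = {g\<in>G. X \<subseteq> g}"
      have Hne: "H \<noteq> {}"
      proof
        assume "H = {}"
        then have "\<Phi> X = 0" unfolding \<Phi>_def H_def by (metis card.empty mult_0_right)
        then show False using PhiX \<open>G \<noteq> {}\<close> finG by simp
      qed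
      have spr: "(n+1) * card {h\<in>H. e \<in> h} \<le> card H" if e: "e \<notin> X" "e \<notin> P" for e
      proof (cases "e \<in> edges_K n")
        case True
        have D: "insert e X \<in> Dom" using X(1) True e cX finX unfolding Dom_def by auto
        have eq: "{h\<in>H. e \<in> h} = {g\<in>G. insert e X \<subseteq> g}" unfolding H_def by blast
        have "\<Phi> (insert e X) = (n+1)^(Suc (card X)) * card {g\<in>G. insert e X \<subseteq> g}"
          using e finX by (simp add: \<Phi>_def)
        then have "(n+1)^card X * ((n+1) * card {h\<in>H. e \<in> h}) = \<Phi> (insert e X)"
          unfolding eq by (metis mult.assoc mult.commute power_Suc)
        also have "\<dots> \<le> \<Phi> X" using maxX[OF D] .
        also have "\<dots> = (n+1)^card X * card H" unfolding \<Phi>_def H_def by simp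
        finally show ?thesis by simp
      next
        case False
        have "{h\<in>H. e \<in> h} = {}"
        proof -
          have "\<And>h. h \<in> H \<Longrightarrow> e \<notin> h" using False less.prems A unfolding H_def perfect_matchings_def by blast
          then show ?thesis by blast
        qed
        then show ?thesis by (metis card.empty le0 mult_0_right)
      qed
      have HA: "H \<subseteq> A" using less.prems unfolding H_def by blast
      have allX: "\<forall>h\<in>H. X \<subseteq> h" unfolding H_def by blast
      have "spread_ok n P X H" unfolding spread_ok_def
        using Hne allX spr by simp
      then have kX: "kern n q P A X"
        unfolding kern_def using XP cX finX HA by blast
      define G1 where "G1 = G - H"
      have "H \<subseteq> G" unfolding H_def by blast
      then have "G1 \<subset> G" unfolding G1_def using Hne by blast
      then have "card G1 < card G" using finG by (rule psubset_card_mono[rotated])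
      moreover have "G1 \<subseteq> A" using less.prems G1_def by blast
      ultimately have "\<exists>K G'. G' \<subseteq> G1 \<and> card G' \<le> (n+1)^(q+1) * odd_dfact (n - (card P + q + 1))
          \<and> (\<forall>X\<in>K. kern n q P A X) \<and> G1 \<subseteq> (\<Union>X\<in>K. {g. X \<subseteq> g}) \<union> G'"
        by (rule less.hyps)
      then obtain K1 G1' where K1: "G1' \<subseteq> G1" "card G1' \<le> (n+1)^(q+1) * odd_dfact (n - (card P + q + 1))"
          "\<forall>X\<in>K1. kern n q P A X" "G1 \<subseteq> (\<Union>X\<in>K1. {g. X \<subseteq> g}) \<union> G1'"
        by blast
      have "G \<subseteq> (\<Union>X\<in>insert X K1. {g. X \<subseteq> g}) \<union> G1'"
        using K1(4) unfolding G1_def H_def by blast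
      moreover have "G1' \<subseteq> G" using K1(1) unfolding G1_def by blast
      moreover have "\<forall>Y\<in>insert X K1. kern n q P A Y" using K1(3) kX by blast
      ultimately show ?thesis using K1(2) by blast
    qed
  qed
qed

lemma avoid:
  fixes H :: "'a set set"
  assumes finH: "finite H" and Hne: "H \<noteq> {}" and finE: "finite E" and cE: "card E \<le> n"
    and sp: "\<forall>e\<in>E. (n+1) * card {h\<in>H. e \<in> h} \<le> card H"
  shows "\<exists>h\<in>H. h \<inter> E = {}"
proof (rule ccontr)
  assume "\<not> (\<exists>h\<in>H. h \<inter> E = {})"
  then have sub: "H \<subseteq> (\<Union>e\<in>E. {h\<in>H. e \<in> h})" by blast
  have "card H \<le> card (\<Union>e\<in>E. {h\<in>H. e \<in> h})"
    using sub finH finE by (intro card_mono) auto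
  also have "\<dots> \<le> (\<Sum>e\<in>E. card {h\<in>H. e \<in> h})" using finE by (rule card_UN_le)
  finally have "(n+1) * card H \<le> (n+1) * (\<Sum>e\<in>E. card {h\<in>H. e \<in> h})"
    by (rule mult_le_mono2)
  also have "\<dots> = (\<Sum>e\<in>E. (n+1) * card {h\<in>H. e \<in> h})" by (simp add: sum_distrib_left)
  also have "\<dots> \<le> (\<Sum>e\<in>E. card H)" using sp by (intro sum_mono) auto
  also have "\<dots> = card E * card H" by simp
  also have "\<dots> \<le> n * card H" using cE by simp
  finally have "(n+1) * card H \<le> n * card H" .
  moreover have "card H > 0" using finH Hne by (simp add: card_gt_0_iff)
  ultimately show False by simp
qed

lemma K1:
  assumes sp: "spread_ok n P X H" and HA: "H \<subseteq> A" and finH: "finite H"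
    and cross: "\<forall>a\<in>A. \<forall>b\<in>B. t \<le> card (a \<inter> b)"
    and b: "b \<in> B" and bP: "b \<inter> P = {}" and cb: "card b \<le> n" and finb: "finite b"
  shows "t \<le> card (b \<inter> X)"
proof -
  have Hne: "H \<noteq> {}" and spr: "\<forall>e. e \<notin> X \<longrightarrow> e \<notin> P \<longrightarrow> (n+1) * card {h\<in>H. e \<in> h} \<le> card H"
    using sp unfolding spread_ok_def by blast+
  have cE: "card (b - X) \<le> n" using cb finb card_Diff_subset by (meson card_mono Diff_subset le_trans)
  have "\<forall>e\<in>b - X. (n+1) * card {h\<in>H. e \<in> h} \<le> card H" using spr bP by blast
  then obtain a where a: "a \<in> H" "a \<inter> (b - X) = {}"
    using avoid[OF finH Hne _ cE] finb by blast
  have "a \<inter> b \<subseteq> b \<inter> X" using a by blast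
  then have "card (a \<inter> b) \<le> card (b \<inter> X)" using finb by (intro card_mono) auto
  moreover have "t \<le> card (a \<inter> b)" using cross a HA b by blast
  ultimately show ?thesis by simp
qed

lemma K2:
  assumes sp: "spread_ok n Q Y H'" and HB: "H' \<subseteq> B" and finH: "finite H'"
    and K1X: "\<forall>b\<in>B. t \<le> card (b \<inter> X)"
    and XQ: "X \<inter> Q = {}" and cX: "card X \<le> n" and finX: "finite X"
  shows "t \<le> card (X \<inter> Y)"
proof -
  have Hne: "H' \<noteq> {}" and spr: "\<forall>e. e \<notin> Y \<longrightarrow> e \<notin> Q \<longrightarrow> (n+1) * card {h\<in>H'. e \<in> h} \<le> card H'"
    using sp unfolding spread_ok_def by blast+
  have cE: "card (X - Y) \<le> n" using cX finX by (meson card_mono Diff_subset le_trans)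
  have "\<forall>e\<in>X - Y. (n+1) * card {h\<in>H'. e \<in> h} \<le> card H'" using spr XQ by blast
  then obtain b where b: "b \<in> H'" "b \<inter> (X - Y) = {}"
    using avoid[OF finH Hne _ cE] finX by blast
  have "b \<inter> X \<subseteq> X \<inter> Y" using b by blast
  then have "card (b \<inter> X) \<le> card (X \<inter> Y)" using finX by (intro card_mono) auto
  moreover have "t \<le> card (b \<inter> X)" using K1X b HB by blast
  ultimately show ?thesis by simp
qed

lemma bound_gen:
  assumes hG: "G \<subseteq> {m \<in> perfect_matchings n. P \<subseteq> m}" and finP: "finite P"
    and finU: "finite U" and UP: "U \<inter> P = {}"
    and hit: "\<forall>a\<in>G. \<exists>W\<subseteq>U. card W = k \<and> W \<subseteq> a"
  shows "card G \<le> (card U choose k) * odd_dfact (n - (card P + k))"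
proof -
  define Ws where "Ws = {W. W \<subseteq> U \<and> card W = k}"
  have finWs: "finite Ws" unfolding Ws_def using finU by simp
  have sub: "G \<subseteq> (\<Union>W\<in>Ws. {m \<in> perfect_matchings n. P \<union> W \<subseteq> m})"
  proof
    fix a assume a: "a \<in> G"
    then obtain W where W: "W \<subseteq> U" "card W = k" "W \<subseteq> a" using hit by blast
    have "a \<in> perfect_matchings n" "P \<subseteq> a" using a hG by blast+
    then show "a \<in> (\<Union>W\<in>Ws. {m \<in> perfect_matchings n. P \<union> W \<subseteq> m})"
      using W unfolding Ws_def by blast
  qed
  have "card G \<le> card (\<Union>W\<in>Ws. {m \<in> perfect_matchings n. P \<union> W \<subseteq> m})"
    using sub finWs by (intro card_mono) (auto intro: finite_subset[OF _ finite_PM[of n]])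
  also have "\<dots> \<le> (\<Sum>W\<in>Ws. card {m \<in> perfect_matchings n. P \<union> W \<subseteq> m})"
    using finWs by (rule card_UN_le)
  also have "\<dots> \<le> (\<Sum>W\<in>Ws. odd_dfact (n - (card P + k)))"
  proof (rule sum_mono)
    fix W assume W: "W \<in> Ws"
    have WU: "W \<subseteq> U" "card W = k" using W unfolding Ws_def by auto
    have finW: "finite W" using WU(1) finU by (rule finite_subset)
    have "P \<inter> W = {}" using WU(1) UP by blast
    then have "card (P \<union> W) = card P + k"
      using card_Un_disjoint[OF finP finW] WU(2) by simp
    then show "card {m \<in> perfect_matchings n. P \<union> W \<subseteq> m} \<le> odd_dfact (n - (card P + k))"
      using PM_count[of n "P \<union> W"] by simp
  qed
  also have "\<dots> = (card U choose k) * odd_dfact (n - (card P + k))"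
    using n_subsets[OF finU, of k] unfolding Ws_def by simp
  finally show ?thesis .
qed

lemma gamma:
  assumes hA: "A \<subseteq> {m \<in> perfect_matchings n. P \<subseteq> m}" and finP: "finite P" and cP: "card P = t"
    and S: "card S = t" "finite S" "S \<inter> P = {}"
    and b0: "b0 \<in> perfect_matchings n" "b0 \<inter> P = {}" "\<not> S \<subseteq> b0"
    and cross0: "\<forall>a\<in>A. t \<le> card (a \<inter> b0)"
  shows "card {a\<in>A. S \<subseteq> a} \<le> (n - 2*t) * odd_dfact (n - (2*t+1))"
proof (cases "{a\<in>A. S \<subseteq> a} = {}")
  case True then show ?thesis by (metis card.empty le0)
next
  case False
  then obtain a1 where a1: "a1 \<in> A" "S \<subseteq> a1" by blast
  have a1PM: "a1 \<in> perfect_matchings n" "P \<subseteq> a1" using a1 hA by blast+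
  have cPS: "card (P \<union> S) = 2*t" using finP S cP by (simp add: card_Un_disjoint Int_commute)
  have cU: "card (\<Union>(P \<union> S)) = 4*t"
    using PM_card_Union[OF a1PM(1), of "P \<union> S"] a1 a1PM cPS by simp
  have USsub: "\<Union>(P \<union> S) \<subseteq> {1..2*n}" using PM_D(3)[OF a1PM(1)] a1 a1PM by blast
  define D where "D = {e \<in> b0. e \<notin> S \<and> e \<inter> \<Union>(P \<union> S) = {}}"
  have finD: "finite D" unfolding D_def using PM_finite_m[OF b0(1)] by simp
  have "card (\<Union>D) = 2 * card D" using PM_card_Union[OF b0(1), of D] unfolding D_def by blast
  moreover have "\<Union>D \<subseteq> {1..2*n} - \<Union>(P \<union> S)"
    using PM_D(3)[OF b0(1)] unfolding D_def by blast
  then have "card (\<Union>D) \<le> card ({1..2*n} - \<Union>(P \<union> S))" by (intro card_mono) auto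
  moreover have "card ({1..2*n} - \<Union>(P \<union> S)) = 2*n - 4*t"
    using card_Diff_subset[OF finite_subset[OF USsub] USsub] cU by simp
  ultimately have cD: "card D \<le> n - 2*t" by simp
  have sub: "{a\<in>A. S \<subseteq> a} \<subseteq> (\<Union>e\<in>D. {m \<in> perfect_matchings n. insert e (P \<union> S) \<subseteq> m})"
  proof
    fix a assume a: "a \<in> {a\<in>A. S \<subseteq> a}"
    then have aA: "a \<in> A" "S \<subseteq> a" by auto
    have aPM: "a \<in> perfect_matchings n" "P \<subseteq> a" using aA hA by blast+
    have finb0: "finite b0" using PM_finite_m[OF b0(1)] .
    have "card (b0 \<inter> S) < t"
    proof -
      have "b0 \<inter> S \<subset> S" using b0(3) by blast
      then show ?thesis using S(1,2) by (metis psubset_card_mono)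
    qed
    moreover have "t \<le> card (a \<inter> b0)" using cross0 aA by blast
    ultimately have "\<not> a \<inter> b0 \<subseteq> b0 \<inter> S"
      by (metis card_mono finite_Int finb0 inf_commute leD le_trans)
    then obtain e where e: "e \<in> a" "e \<in> b0" "e \<notin> S" by blast
    have eP: "e \<notin> P" using e b0(2) by blast
    have "e \<inter> \<Union>(P \<union> S) = {}"
    proof -
      have "\<And>f. f \<in> P \<union> S \<Longrightarrow> e \<inter> f = {}"
        using PM_D(2)[OF aPM(1)] e eP aPM(2) aA(2) by blast
      then show ?thesis by blast
    qed
    then have "e \<in> D" unfolding D_def using e by blast
    moreover have "insert e (P \<union> S) \<subseteq> a" using e aPM aA by blast
    ultimately show "a \<in> (\<Union>e\<in>D. {m \<in> perfect_matchings n. insert e (P \<union> S) \<subseteq> m})"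
      using aPM by blast
  qed
  have "card {a\<in>A. S \<subseteq> a} \<le> card (\<Union>e\<in>D. {m \<in> perfect_matchings n. insert e (P \<union> S) \<subseteq> m})"
    using sub finD by (intro card_mono) (auto intro: finite_subset[OF _ finite_PM[of n]])
  also have "\<dots> \<le> (\<Sum>e\<in>D. card {m \<in> perfect_matchings n. insert e (P \<union> S) \<subseteq> m})"
    using finD by (rule card_UN_le)
  also have "\<dots> \<le> (\<Sum>e\<in>D. odd_dfact (n - (2*t+1)))"
  proof (rule sum_mono)
    fix e assume e: "e \<in> D"
    have "e \<notin> P \<union> S" using e b0(2) unfolding D_def by blast
    then have "card (insert e (P \<union> S)) = 2*t+1" using cPS finP S(2) by simp
    then show "card {m \<in> perfect_matchings n. insert e (P \<union> S) \<subseteq> m} \<le> odd_dfact (n - (2*t+1))"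
      using PM_count[of n "insert e (P \<union> S)"] by simp
  qed
  also have "\<dots> = card D * odd_dfact (n - (2*t+1))" by simp
  also have "\<dots> \<le> (n - 2*t) * odd_dfact (n - (2*t+1))" using cD by simp
  finally show ?thesis .
qed

lemma U_exists:
  assumes Y1: "Y1 \<in> KB" and KBf: "\<forall>Y\<in>KB. finite Y \<and> card Y \<le> q \<and> Y \<inter> P = {}"
    and np: "\<not> (\<exists>S. card S = t \<and> (\<forall>Y\<in>KB. S \<subseteq> Y))"
  shows "\<exists>U. finite U \<and> U \<inter> P = {} \<and> card U \<le> q + (q choose t) * q \<and>
     (\<forall>X. finite X \<longrightarrow> (\<forall>Y\<in>KB. t \<le> card (X \<inter> Y)) \<longrightarrow> (\<exists>W\<subseteq>U. card W = t+1 \<and> W \<subseteq> X))"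
proof -
  define Ss where "Ss = {S. S \<subseteq> Y1 \<and> card S = t}"
  have ex: "\<forall>S\<in>Ss. \<exists>Y\<in>KB. \<not> S \<subseteq> Y" using np unfolding Ss_def by blast
  define f where "f S = (SOME Y. Y \<in> KB \<and> \<not> S \<subseteq> Y)" for S
  have f: "f S \<in> KB \<and> \<not> S \<subseteq> f S" if S: "S \<in> Ss" for S
  proof -
    have "\<exists>Y. Y \<in> KB \<and> \<not> S \<subseteq> Y" using ex S by blast
    then show ?thesis unfolding f_def by (rule someI_ex)
  qed
  define U where "U = Y1 \<union> \<Union>(f ` Ss)"
  have finY1: "finite Y1" "card Y1 \<le> q" "Y1 \<inter> P = {}" using KBf Y1 by auto
  have finSs: "finite Ss" unfolding Ss_def using finY1 by simp
  have cSs: "card Ss \<le> q choose t"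
    unfolding Ss_def n_subsets[OF finY1(1), of t] using finY1(2) by (rule binomial_right_mono)
  have fin_f: "\<And>S. S \<in> Ss \<Longrightarrow> finite (f S) \<and> f S \<inter> P = {}" using f KBf by blast
  have "finite (\<Union>(f ` Ss))" using finSs fin_f by (intro finite_UN_I) auto
  then have finU: "finite U" unfolding U_def using finY1(1) by simp
  have UP: "U \<inter> P = {}" unfolding U_def using finY1(3) fin_f by blast
  have "card (\<Union>(f ` Ss)) \<le> (\<Sum>S\<in>Ss. card (f S))"
    using card_UN_le[OF finSs, of f] by simp
  also have "\<dots> \<le> (\<Sum>S\<in>Ss. q)" using f KBf by (intro sum_mono) auto
  also have "\<dots> = card Ss * q" by simp
  also have "\<dots> \<le> (q choose t) * q" using cSs by simp
  finally have "card (\<Union>(f ` Ss)) \<le> (q choose t) * q" .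
  then have cU: "card U \<le> q + (q choose t) * q"
    unfolding U_def using finY1(2) card_Un_le[of Y1 "\<Union>(f ` Ss)"] by linarith
  have hit: "\<exists>W\<subseteq>U. card W = t+1 \<and> W \<subseteq> X"
    if finX: "finite X" and XY: "\<forall>Y\<in>KB. t \<le> card (X \<inter> Y)" for X
  proof (cases "t + 1 \<le> card (X \<inter> Y1)")
    case True
    then obtain W where "W \<subseteq> X \<inter> Y1" "card W = t+1" by (meson obtain_subset_with_card_n)
    then show ?thesis unfolding U_def by blast
  next
    case False
    define S where "S = X \<inter> Y1"
    have cS: "card S = t" using XY Y1 False unfolding S_def by force
    have SSs: "S \<in> Ss" unfolding Ss_def S_def using cS S_def by blast
    have fS: "f S \<in> KB" "\<not> S \<subseteq> f S" using f[OF SSs] by auto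
    have finS: "finite S" unfolding S_def using finX by simp
    have "\<not> X \<inter> f S \<subseteq> S"
    proof
      assume sub: "X \<inter> f S \<subseteq> S"
      then have "X \<inter> f S \<subseteq> S \<inter> f S" by blast
      moreover have "S \<inter> f S \<subset> S" using fS(2) by blast
      have c1: "card (X \<inter> f S) \<le> card (S \<inter> f S)"
        by (rule card_mono) (use finS \<open>X \<inter> f S \<subseteq> S \<inter> f S\<close> in auto)
      have c2: "card (S \<inter> f S) < card S" by (rule psubset_card_mono[OF finS \<open>S \<inter> f S \<subset> S\<close>])
      have c3: "t \<le> card (X \<inter> f S)" using XY fS(1) by blast
      show False using c1 c2 c3 cS by linarith
    qed
    then obtain g where g: "g \<in> X" "g \<in> f S" "g \<notin> S" by blast
    have "insert g S \<subseteq> U" unfolding U_def S_def using g SSs by blast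
    moreover have "card (insert g S) = t+1" using g(3) finS cS by simp
    moreover have "insert g S \<subseteq> X" using g unfolding S_def by blast
    ultimately show ?thesis by blast
  qed
  show ?thesis
    apply (rule exI[of _ U])
    using finU UP cU hit by blast
qed

definition sidedata where
  "sidedata n q t P Q A B K A' \<longleftrightarrow> A' \<subseteq> A \<and> card A' \<le> (n+1)^(q+1) * odd_dfact (n - (t + q + 1)) \<and>
     A \<subseteq> (\<Union>X\<in>K. {g. X \<subseteq> g}) \<union> A' \<and>
     (\<forall>X\<in>K. kern n q P A X \<and> X \<inter> Q = {} \<and> (\<forall>b\<in>B. t \<le> card (b \<inter> X)))"

lemma sidedata_D:
  assumes "sidedata n q t P Q A B K A'"
  shows "A' \<subseteq> A" "card A' \<le> (n+1)^(q+1) * odd_dfact (n - (t + q + 1))"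
    "A \<subseteq> (\<Union>X\<in>K. {g. X \<subseteq> g}) \<union> A'"
    "\<And>X. X \<in> K \<Longrightarrow> kern n q P A X" "\<And>X. X \<in> K \<Longrightarrow> X \<inter> Q = {}"
    "\<And>X b. X \<in> K \<Longrightarrow> b \<in> B \<Longrightarrow> t \<le> card (b \<inter> X)"
  using assms unfolding sidedata_def by simp_all

lemma kern_D:
  assumes "kern n q P A X"
  shows "X \<inter> P = {}" "card X \<le> q" "finite X" "\<exists>H\<subseteq>A. spread_ok n P X H"
  using assms unfolding kern_def by simp_all

lemma fin_fam: "A \<subseteq> {m \<in> perfect_matchings n. P \<subseteq> m} \<Longrightarrow> finite A"
proof -
  assume "A \<subseteq> {m \<in> perfect_matchings n. P \<subseteq> m}"
  then have "A \<subseteq> perfect_matchings n" by blast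
  then show "finite A" using finite_PM by (rule finite_subset)
qed

lemma side:
  assumes hA: "A \<subseteq> {m \<in> perfect_matchings n. P \<subseteq> m}" and hB: "B \<subseteq> {m \<in> perfect_matchings n. Q \<subseteq> m}"
    and finP: "finite P" and cP: "card P = t"
    and cross: "\<forall>a\<in>A. \<forall>b\<in>B. t \<le> card (a \<inter> b)"
    and BP: "\<forall>b\<in>B. b \<inter> P = {}" and AQ: "\<forall>a\<in>A. a \<inter> Q = {}"
  shows "\<exists>K A'. sidedata n q t P Q A B K A'"
proof -
  obtain K A' where KA: "A' \<subseteq> A" "card A' \<le> (n+1)^(q+1) * odd_dfact (n - (card P + q + 1))"
     "\<forall>X\<in>K. kern n q P A X" "A \<subseteq> (\<Union>X\<in>K. {g. X \<subseteq> g}) \<union> A'"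
    using cover[OF hA finP, of A q] by blast
  have finA: "finite A" using fin_fam[OF hA] .
  have "\<forall>X\<in>K. X \<inter> Q = {} \<and> (\<forall>b\<in>B. t \<le> card (b \<inter> X))"
  proof
    fix X assume X: "X \<in> K"
    then obtain H where H: "H \<subseteq> A" "spread_ok n P X H" using KA(3) unfolding kern_def by blast
    have finH: "finite H" using H(1) finA by (rule finite_subset)
    obtain h where h: "h \<in> H" "X \<subseteq> h" using H(2) unfolding spread_ok_def by blast
    have XQ: "X \<inter> Q = {}" using h H(1) AQ by blast
    have "\<forall>b\<in>B. t \<le> card (b \<inter> X)"
    proof
      fix b assume b: "b \<in> B"
      have bPM: "b \<in> perfect_matchings n" using b hB by blast
      show "t \<le> card (b \<inter> X)"
        by (rule K1[OF H(2) H(1) finH cross b]) (use BP b PM_card[OF bPM] PM_finite_m[OF bPM] in auto)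
    qed
    then show "X \<inter> Q = {} \<and> (\<forall>b\<in>B. t \<le> card (b \<inter> X))" using XQ by blast
  qed
  then have "sidedata n q t P Q A B K A'"
    unfolding sidedata_def using KA cP by simp
  then show ?thesis by blast
qed

lemma kern_disj:
  assumes "kern n q Q B Y" and "\<forall>b\<in>B. b \<inter> P = {}"
  shows "Y \<inter> P = {}"
proof -
  obtain H where H: "H \<subseteq> B" "spread_ok n Q Y H" using assms(1) unfolding kern_def by blast
  obtain h where h: "h \<in> H" "Y \<subseteq> h" using H(2) unfolding spread_ok_def by blast
  show ?thesis using h H(1) assms(2) by blast
qed

lemma kk:
  assumes sdA: "sidedata n q t P Q A B KA A'" and sdB: "sidedata n q t Q P B A KB B'"
    and X: "X \<in> KA" and Y: "Y \<in> KB" and qn: "q \<le> n" and finB: "finite B"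
  shows "t \<le> card (X \<inter> Y)"
proof -
  have kX: "kern n q P A X" "X \<inter> Q = {}" "\<forall>b\<in>B. t \<le> card (b \<inter> X)"
    using sidedata_D(4-6)[OF sdA X] by blast+
  obtain H where H: "H \<subseteq> B" "spread_ok n Q Y H" using kern_D(4)[OF sidedata_D(4)[OF sdB Y]] by blast
  have finH: "finite H" using H(1) finB by (rule finite_subset)
  have "card X \<le> n" "finite X" using kern_D(2,3)[OF kX(1)] qn by auto
  then show ?thesis using K2[OF H(2) H(1) finH kX(3) kX(2)] by blast
qed

lemma half_I:
  assumes hA: "A \<subseteq> {m \<in> perfect_matchings n. P \<subseteq> m}" and hB: "B \<subseteq> {m \<in> perfect_matchings n. Q \<subseteq> m}"
    and finP: "finite P" and finQ: "finite Q" and cP: "card P = t" and cQ: "card Q = t"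
    and sdA: "sidedata n q t P Q A B KA A'" and sdB: "sidedata n q t Q P B A KB B'"
    and qn: "q \<le> n" and KA: "KA \<noteq> {}" and KB: "KB \<noteq> {}"
    and np: "\<not> (\<exists>S. card S = t \<and> (\<forall>Y\<in>KB. S \<subseteq> Y))"
    and BP: "\<forall>b\<in>B. b \<inter> P = {}" and AQ: "\<forall>a\<in>A. a \<inter> Q = {}"
  shows "card A \<le> ((q + (q choose t) * q) choose (t+1)) * odd_dfact (n - (2*t+1)) + (n+1)^(q+1) * odd_dfact (n - (t + q + 1))"
    and "card B \<le> (q choose t) * odd_dfact (n - 2*t)"
proof -
  have finA: "finite A" using fin_fam[OF hA] .
  have finB: "finite B" using fin_fam[OF hB] .
  obtain X0 where X0: "X0 \<in> KA" using KA by blast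
  have kX0: "kern n q P A X0" "X0 \<inter> Q = {}" "\<forall>b\<in>B. t \<le> card (b \<inter> X0)"
    using sidedata_D(4-6)[OF sdA X0] by blast+
  have finX0: "finite X0" "card X0 \<le> q" using kern_D[OF kX0(1)] by auto
  have "\<forall>b\<in>B. \<exists>W\<subseteq>X0. card W = t \<and> W \<subseteq> b"
  proof
    fix b assume "b \<in> B"
    then have "t \<le> card (b \<inter> X0)" using kX0(3) by blast
    then obtain W where "W \<subseteq> b \<inter> X0" "card W = t" by (rule obtain_subset_with_card_n)
    then show "\<exists>W\<subseteq>X0. card W = t \<and> W \<subseteq> b" by blast
  qed
  moreover have "X0 \<inter> Q = {}" using kX0(2) by blast
  ultimately have "card B \<le> (card X0 choose t) * odd_dfact (n - (card Q + t))"
    using bound_gen[OF hB finQ finX0(1)] by (metis Int_commute)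
  also have "\<dots> = (card X0 choose t) * odd_dfact (n - 2*t)" using cQ by (simp add: mult_2)
  also have "\<dots> \<le> (q choose t) * odd_dfact (n - 2*t)"
    using finX0(2) by (intro mult_le_mono1 binomial_right_mono)
  finally show "card B \<le> (q choose t) * odd_dfact (n - 2*t)" .
  have KBf: "\<forall>Y\<in>KB. finite Y \<and> card Y \<le> q \<and> Y \<inter> P = {}"
  proof
    fix Y assume Y: "Y \<in> KB"
    then have kY: "kern n q Q B Y" using sidedata_D(4)[OF sdB] by blast
    then show "finite Y \<and> card Y \<le> q \<and> Y \<inter> P = {}" using kern_disj[OF kY BP] kern_D[OF kY] by blast
  qed
  obtain Y1 where Y1: "Y1 \<in> KB" using KB by blast
  obtain U where U0: "finite U \<and> U \<inter> P = {} \<and> card U \<le> q + (q choose t) * q \<and>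
     (\<forall>X. finite X \<longrightarrow> (\<forall>Y\<in>KB. t \<le> card (X \<inter> Y)) \<longrightarrow> (\<exists>W\<subseteq>U. card W = t+1 \<and> W \<subseteq> X))"
    using U_exists[OF Y1 KBf np] by (elim exE)
  note U = conjunct1[OF U0] conjunct1[OF conjunct2[OF U0]] conjunct1[OF conjunct2[OF conjunct2[OF U0]]]
     conjunct2[OF conjunct2[OF conjunct2[OF U0]]]
  define G where "G = {a\<in>A. \<exists>X\<in>KA. X \<subseteq> a}"
  have hG: "G \<subseteq> {m \<in> perfect_matchings n. P \<subseteq> m}" using hA unfolding G_def by blast
  have "\<forall>a\<in>G. \<exists>W\<subseteq>U. card W = t+1 \<and> W \<subseteq> a"
  proof
    fix a assume "a \<in> G"
    then obtain X where X: "X \<in> KA" "X \<subseteq> a" unfolding G_def by blast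
    have fX: "finite X" using kern_D(3)[OF sidedata_D(4)[OF sdA X(1)]] .
    have XY: "t \<le> card (X \<inter> Y)" if "Y \<in> KB" for Y
      using that by (rule kk[OF sdA sdB X(1) _ qn finB])
    have "\<exists>W\<subseteq>U. card W = t+1 \<and> W \<subseteq> X"
      by (rule U(4)[rule_format, OF fX]) (rule XY)
    then obtain W where "W \<subseteq> U" "card W = t+1" "W \<subseteq> X" by (elim exE conjE)
    then show "\<exists>W\<subseteq>U. card W = t+1 \<and> W \<subseteq> a" using X(2) by blast
  qed
  then have "card G \<le> (card U choose (t+1)) * odd_dfact (n - (card P + (t+1)))"
    by (rule bound_gen[OF hG finP U(1) U(2)])
  also have "\<dots> = (card U choose (t+1)) * odd_dfact (n - (2*t+1))" using cP by (simp add: mult_2)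
  also have "\<dots> \<le> ((q + (q choose t) * q) choose (t+1)) * odd_dfact (n - (2*t+1))"
    using U(3) by (intro mult_le_mono1 binomial_right_mono)
  finally have cG: "card G \<le> ((q + (q choose t) * q) choose (t+1)) * odd_dfact (n - (2*t+1))" .
  have A': "A' \<subseteq> A" "card A' \<le> (n+1)^(q+1) * odd_dfact (n - (t + q + 1))"
     "A \<subseteq> (\<Union>X\<in>KA. {g. X \<subseteq> g}) \<union> A'" using sidedata_D(1-3)[OF sdA] by blast+
  have "A \<subseteq> G \<union> A'" using A'(3) unfolding G_def by blast
  moreover have "G \<union> A' \<subseteq> A" using A'(1) unfolding G_def by blast
  then have "finite (G \<union> A')" using finA by (rule finite_subset)
  ultimately have "card A \<le> card (G \<union> A')" by (rule card_mono[rotated])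
  also have "\<dots> \<le> card G + card A'" by (rule card_Un_le)
  finally show "card A \<le> ((q + (q choose t) * q) choose (t+1)) * odd_dfact (n - (2*t+1)) + (n+1)^(q+1) * odd_dfact (n - (t + q + 1))"
    using cG A'(2) by linarith
qed

lemma A_split:
  assumes sdA: "sidedata n q t P Q A B KA A'" and SX: "\<forall>X\<in>KA. S \<subseteq> X" and finA: "finite A"
  shows "card A \<le> card {a\<in>A. S \<subseteq> a} + (n+1)^(q+1) * odd_dfact (n - (t + q + 1))"
proof -
  have A': "A' \<subseteq> A" "card A' \<le> (n+1)^(q+1) * odd_dfact (n - (t + q + 1))"
     "A \<subseteq> (\<Union>X\<in>KA. {g. X \<subseteq> g}) \<union> A'" using sidedata_D(1-3)[OF sdA] by blast+
  have "A \<subseteq> {a\<in>A. S \<subseteq> a} \<union> A'" using A'(3) SX by blast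
  moreover have "{a\<in>A. S \<subseteq> a} \<union> A' \<subseteq> A" using A'(1) by blast
  then have "finite ({a\<in>A. S \<subseteq> a} \<union> A')" using finA by (rule finite_subset)
  ultimately have "card A \<le> card ({a\<in>A. S \<subseteq> a} \<union> A')" by (rule card_mono[rotated])
  also have "\<dots> \<le> card {a\<in>A. S \<subseteq> a} + card A'" by (rule card_Un_le)
  finally show ?thesis using A'(2) by linarith
qed

lemma count_S:
  assumes hA: "A \<subseteq> {m \<in> perfect_matchings n. P \<subseteq> m}" and finP: "finite P" and cP: "card P = t"
    and S: "finite S" "card S = t" "S \<inter> P = {}"
  shows "card {a\<in>A. S \<subseteq> a} \<le> odd_dfact (n - 2*t)"
proof -
  have "{a\<in>A. S \<subseteq> a} \<subseteq> {m \<in> perfect_matchings n. P \<union> S \<subseteq> m}" using hA by blast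
  then have "card {a\<in>A. S \<subseteq> a} \<le> card {m \<in> perfect_matchings n. P \<union> S \<subseteq> m}"
    by (rule card_mono[rotated]) (rule finite_subset[OF _ finite_PM[of n]], blast)
  also have "\<dots> \<le> odd_dfact (n - card (P \<union> S))" by (rule PM_count)
  also have "card (P \<union> S) = 2*t" using card_Un_disjoint[OF finP S(1)] S(2,3) cP by (simp add: Int_commute)
  finally show ?thesis by simp
qed

lemma count_SS:
  assumes hA: "A \<subseteq> {m \<in> perfect_matchings n. P \<subseteq> m}" and finP: "finite P" and cP: "card P = t"
    and S: "finite S" "card S = t" "S \<inter> P = {}"
    and S': "finite S'" "card S' = t" "S' \<inter> P = {}" and ne: "S \<noteq> S'" and allS': "\<forall>a\<in>A. S' \<subseteq> a"
  shows "card {a\<in>A. S \<subseteq> a} \<le> odd_dfact (n - (2*t+1))"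
proof -
  have "{a\<in>A. S \<subseteq> a} \<subseteq> {m \<in> perfect_matchings n. P \<union> (S \<union> S') \<subseteq> m}" using hA allS' by blast
  then have "card {a\<in>A. S \<subseteq> a} \<le> card {m \<in> perfect_matchings n. P \<union> (S \<union> S') \<subseteq> m}"
    by (rule card_mono[rotated]) (rule finite_subset[OF _ finite_PM[of n]], blast)
  also have "\<dots> \<le> odd_dfact (n - card (P \<union> (S \<union> S')))" by (rule PM_count)
  also have "\<dots> \<le> odd_dfact (n - (2*t+1))"
  proof (rule odd_dfact_mono)
    have "\<not> S' \<subseteq> S"
    proof
      assume "S' \<subseteq> S"
      then have "S' = S" using S(1) S(2) S'(2) by (simp add: card_subset_eq)
      then show False using ne by simp
    qed
    then have "S \<subset> S \<union> S'" by blast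
    then have "card S < card (S \<union> S')" using S(1) S'(1) by (intro psubset_card_mono) auto
    moreover have "card (P \<union> (S \<union> S')) = card P + card (S \<union> S')"
      using S(3) S'(3) finP S(1) S'(1) by (intro card_Un_disjoint) auto
    ultimately show "n - card (P \<union> (S \<union> S')) \<le> n - (2*t+1)" using cP S(2) by linarith
  qed
  finally show ?thesis .
qed

lemma main_comb:
  assumes hA: "A \<subseteq> {m \<in> perfect_matchings n. P \<subseteq> m}" and hB: "B \<subseteq> {m \<in> perfect_matchings n. Q \<subseteq> m}"
    and finP: "finite P" and finQ: "finite Q" and cP: "card P = t" and cQ: "card Q = t"
    and cross: "\<forall>a\<in>A. \<forall>b\<in>B. t \<le> card (a \<inter> b)"
    and BP: "\<forall>b\<in>B. b \<inter> P = {}" and AQ: "\<forall>a\<in>A. a \<inter> Q = {}" and qn: "q \<le> n"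
    and R: "R = (n+1)^(q+1) * odd_dfact (n - (t + q + 1))" and Mt: "Mt = odd_dfact (n - 2*t)"
    and Mt1: "Mt1 = odd_dfact (n - (2*t+1))" and M0: "M0 = odd_dfact (n - t)"
    and H1: "R * M0 \<le> Mt * Mt"
    and H2: "(((q + (q choose t) * q) choose (t+1)) * Mt1 + R) * ((q choose t) * Mt) \<le> Mt * Mt"
    and H3: "((n - 2*t) * Mt1 + R) * (Mt + R) \<le> Mt * Mt"
    and H4: "(Mt1 + R) * (Mt + R) \<le> Mt * Mt"
  shows "card A * card B \<le> Mt * Mt"
proof -
  have finA: "finite A" using fin_fam[OF hA] .
  have finB: "finite B" using fin_fam[OF hB] .
  have cross': "\<forall>b\<in>B. \<forall>a\<in>A. t \<le> card (b \<inter> a)"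
  proof (intro ballI)
    fix b a assume "b \<in> B" "a \<in> A"
    then have "t \<le> card (a \<inter> b)" using cross by blast
    then show "t \<le> card (b \<inter> a)" by (simp add: Int_commute)
  qed
  obtain KA A' where sdA: "sidedata n q t P Q A B KA A'"
    using side[OF hA hB finP cP cross BP AQ] by blast
  obtain KB B' where sdB: "sidedata n q t Q P B A KB B'"
    using side[OF hB hA finQ cQ cross' AQ BP] by blast
  have cA0: "card A \<le> M0"
  proof -
    have "card A \<le> card {m \<in> perfect_matchings n. P \<subseteq> m}"
      by (rule card_mono[OF _ hA]) (rule finite_subset[OF _ finite_PM[of n]], blast)
    also have "\<dots> \<le> M0" using PM_count[of n P] cP M0 by simp
    finally show ?thesis .
  qed
  have cB0: "card B \<le> M0"
  proof -
    have "card B \<le> card {m \<in> perfect_matchings n. Q \<subseteq> m}"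
      by (rule card_mono[OF _ hB]) (rule finite_subset[OF _ finite_PM[of n]], blast)
    also have "\<dots> \<le> M0" using PM_count[of n Q] cQ M0 by simp
    finally show ?thesis .
  qed
  have A'R: "card A' \<le> R" "A' \<subseteq> A" using sidedata_D(1,2)[OF sdA] R by auto
  have B'R: "card B' \<le> R" "B' \<subseteq> B" using sidedata_D(1,2)[OF sdB] R by auto
  show ?thesis
  proof (cases "KA = {}")
    case True
    then have "A \<subseteq> A'" using sidedata_D(3)[OF sdA] by blast
    then have "card A \<le> R" using A'R card_mono[OF _ \<open>A \<subseteq> A'\<close>] finA finite_subset by (metis le_trans)
    then have "card A * card B \<le> R * M0" using cB0 by (rule mult_le_mono)
    then show ?thesis using H1 by linarith
  next
    case KAne: False
    show ?thesis
    proof (cases "KB = {}")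
      case True
      then have "B \<subseteq> B'" using sidedata_D(3)[OF sdB] by blast
      then have "card B \<le> R" using B'R card_mono[OF _ \<open>B \<subseteq> B'\<close>] finB finite_subset by (metis le_trans)
      then have "card A * card B \<le> M0 * R" using cA0 by (intro mult_le_mono)
      then show ?thesis using H1 by (simp add: mult.commute)
    next
      case KBne: False
      show ?thesis
      proof (cases "\<exists>S. card S = t \<and> (\<forall>Y\<in>KB. S \<subseteq> Y)")
        case npB: False
        have c1: "card A \<le> ((q + (q choose t) * q) choose (t+1)) * Mt1 + R"
          using half_I(1)[OF hA hB finP finQ cP cQ sdA sdB qn KAne KBne npB BP AQ] R Mt1 by simp
        have c2: "card B \<le> (q choose t) * Mt"
          using half_I(2)[OF hA hB finP finQ cP cQ sdA sdB qn KAne KBne npB BP AQ] Mt by simp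
        have "card A * card B \<le> (((q + (q choose t) * q) choose (t+1)) * Mt1 + R) * ((q choose t) * Mt)"
          using c1 c2 by (rule mult_le_mono)
        then show ?thesis using H2 by linarith
      next
        case pB: True
        show ?thesis
        proof (cases "\<exists>S. card S = t \<and> (\<forall>X\<in>KA. S \<subseteq> X)")
          case npA: False
          have c1: "card B \<le> ((q + (q choose t) * q) choose (t+1)) * Mt1 + R"
            using half_I(1)[OF hB hA finQ finP cQ cP sdB sdA qn KBne KAne npA AQ BP] R Mt1 by simp
          have c2: "card A \<le> (q choose t) * Mt"
            using half_I(2)[OF hB hA finQ finP cQ cP sdB sdA qn KBne KAne npA AQ BP] Mt by simp
          have "card B * card A \<le> (((q + (q choose t) * q) choose (t+1)) * Mt1 + R) * ((q choose t) * Mt)"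
            using c1 c2 by (rule mult_le_mono)
          then show ?thesis using H2 by (metis (no_types) mult.commute le_trans)
        next
          case pA: True
          obtain SA where SA: "card SA = t" "\<forall>X\<in>KA. SA \<subseteq> X" using pA by blast
          obtain SB where SB: "card SB = t" "\<forall>Y\<in>KB. SB \<subseteq> Y" using pB by blast
          obtain X0 where X0: "X0 \<in> KA" using KAne by blast
          obtain Y0 where Y0: "Y0 \<in> KB" using KBne by blast
          have kX0: "kern n q P A X0" using sidedata_D(4)[OF sdA X0] .
          have kY0: "kern n q Q B Y0" using sidedata_D(4)[OF sdB Y0] .
          have SAX: "SA \<subseteq> X0" using SA(2) X0 by blast
          have SBY: "SB \<subseteq> Y0" using SB(2) Y0 by blast
          have finSA: "finite SA" using finite_subset[OF SAX kern_D(3)[OF kX0]] .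
          have finSB: "finite SB" using finite_subset[OF SBY kern_D(3)[OF kY0]] .
          have SAP: "SA \<inter> P = {}" using kern_D(1)[OF kX0] SAX by blast
          have SBQ: "SB \<inter> Q = {}" using kern_D(1)[OF kY0] SBY by blast
          have SBP: "SB \<inter> P = {}" using kern_disj[OF kY0 BP] SBY by blast
          have SAQ: "SA \<inter> Q = {}" using kern_disj[OF kX0 AQ] SAX by blast
          have cA: "card A \<le> card {a\<in>A. SA \<subseteq> a} + R" using A_split[OF sdA SA(2) finA] R by simp
          have cB: "card B \<le> card {b\<in>B. SB \<subseteq> b} + R" using A_split[OF sdB SB(2) finB] R by simp
          have cSA: "card {a\<in>A. SA \<subseteq> a} \<le> Mt" using count_S[OF hA finP cP finSA SA(1) SAP] Mt by simp
          have cSB: "card {b\<in>B. SB \<subseteq> b} \<le> Mt" using count_S[OF hB finQ cQ finSB SB(1) SBQ] Mt by simp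
          show ?thesis
          proof (cases "\<exists>b0\<in>B. \<not> SA \<subseteq> b0")
            case True
            then obtain b0 where b0: "b0 \<in> B" "\<not> SA \<subseteq> b0" by blast
            have b0PM: "b0 \<in> perfect_matchings n" using b0(1) hB by blast
            have "card {a\<in>A. SA \<subseteq> a} \<le> (n - 2*t) * Mt1"
              using gamma[OF hA finP cP SA(1) finSA SAP b0PM _ b0(2)] BP b0(1) cross Mt1 by simp
            then have c1: "card A \<le> (n - 2*t) * Mt1 + R" using cA by linarith
            have c2: "card B \<le> Mt + R" using cB cSB by linarith
            have "card A * card B \<le> ((n - 2*t) * Mt1 + R) * (Mt + R)" using c1 c2 by (rule mult_le_mono)
            then show ?thesis using H3 by linarith
          next
            case allB: False
            show ?thesis
            proof (cases "\<exists>a0\<in>A. \<not> SB \<subseteq> a0")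
              case True
              then obtain a0 where a0: "a0 \<in> A" "\<not> SB \<subseteq> a0" by blast
              have a0PM: "a0 \<in> perfect_matchings n" using a0(1) hA by blast
              have "card {b\<in>B. SB \<subseteq> b} \<le> (n - 2*t) * Mt1"
                using gamma[OF hB finQ cQ SB(1) finSB SBQ a0PM _ a0(2)] AQ a0(1) cross' Mt1 by simp
              then have c1: "card B \<le> (n - 2*t) * Mt1 + R" using cB by linarith
              have c2: "card A \<le> Mt + R" using cA cSA by linarith
              have "card B * card A \<le> ((n - 2*t) * Mt1 + R) * (Mt + R)" using c1 c2 by (rule mult_le_mono)
              then show ?thesis using H3 by (metis (no_types) mult.commute le_trans)
            next
              case allA: False
              have allA': "\<forall>a\<in>A. SB \<subseteq> a" using allA by blast
              have allB': "\<forall>b\<in>B. SA \<subseteq> b" using allB by blast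
              show ?thesis
              proof (cases "SA = SB")
                case True
                have "{a\<in>A. SA \<subseteq> a} = A" using allA' True by blast
                then have c1: "card A \<le> Mt" using cSA by simp
                have "{b\<in>B. SB \<subseteq> b} = B" using allB' True by blast
                then have c2: "card B \<le> Mt" using cSB by simp
                show ?thesis using c1 c2 by (rule mult_le_mono)
              next
                case False
                have "card {a\<in>A. SA \<subseteq> a} \<le> Mt1"
                  using count_SS[OF hA finP cP finSA SA(1) SAP finSB SB(1) SBP False allA'] Mt1 by simp
                then have c1: "card A \<le> Mt1 + R" using cA by linarith
                have c2: "card B \<le> Mt + R" using cB cSB by linarith
                have "card A * card B \<le> (Mt1 + R) * (Mt + R)" using c1 c2 by (rule mult_le_mono)
                then show ?thesis using H4 by linarith
              qed
            qed
          qed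
        qed
      qed
    qed
  qed
qed

lemma RZ:
  assumes nq: "4*t + 4*q + 5 \<le> n" and qt: "t \<le> q + 1"
    and Z: "2^(q+1-t) * (n+1)^t * Z \<le> 3^(q+1-t)"
  shows "(n+1)^(q+1) * odd_dfact (n - (t + q + 1)) * Z \<le> odd_dfact (n - 2*t)"
proof -
  define a where "a = n - (t + q + 1)"
  define k where "k = q + 1 - t"
  have ak: "a + k = n - 2*t" unfolding a_def k_def using nq qt by simp
  have qk: "q + 1 = t + k" unfolding k_def using qt by simp
  have low: "(2*a+1)^k * odd_dfact a \<le> odd_dfact (n - 2*t)"
    using odd_dfact_lower[of a k] ak by simp
  have base: "3*(n+1) \<le> 2*(2*a+1)" unfolding a_def using nq by simp
  have "2^k * ((n+1)^(q+1) * odd_dfact a * Z) = ((n+1)^k * odd_dfact a) * (2^k * (n+1)^t * Z)"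
    unfolding qk by (simp add: power_add algebra_simps)
  also have "\<dots> \<le> ((n+1)^k * odd_dfact a) * 3^k" using Z unfolding k_def by (intro mult_le_mono2) simp
  also have "\<dots> = (3*(n+1))^k * odd_dfact a" by (simp only: power_mult_distrib mult.commute mult.left_commute)
  also have "\<dots> \<le> (2*(2*a+1))^k * odd_dfact a" using base by (intro mult_le_mono1 power_mono) auto
  also have "\<dots> = 2^k * ((2*a+1)^k * odd_dfact a)" by (simp only: power_mult_distrib mult.assoc)
  also have "\<dots> \<le> 2^k * odd_dfact (n - 2*t)" using low by (intro mult_le_mono2)
  finally have "2^k * ((n+1)^(q+1) * odd_dfact a * Z) \<le> 2^k * odd_dfact (n - 2*t)" .
  then show ?thesis unfolding a_def by simp
qed

lemma arith:
  assumes qt: "t \<le> q" and nq: "4*t + 4*q + 5 \<le> n"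
    and P1: "2^(q+1-t) * (n+1)^t * (10 * (2*n)^t * (q choose t)) \<le> 3^(q+1-t)"
    and P2: "2 * (((q + (q choose t) * q) choose (t+1)) * (q choose t)) \<le> 2*(n - 2*t) - 1"
    and R: "R = (n+1)^(q+1) * odd_dfact (n - (t + q + 1))" and Mt: "Mt = odd_dfact (n - 2*t)"
    and Mt1: "Mt1 = odd_dfact (n - (2*t+1))" and M0: "M0 = odd_dfact (n - t)"
  shows "R * M0 \<le> Mt * Mt"
    and "(((q + (q choose t) * q) choose (t+1)) * Mt1 + R) * ((q choose t) * Mt) \<le> Mt * Mt"
    and "((n - 2*t) * Mt1 + R) * (Mt + R) \<le> Mt * Mt"
    and "(Mt1 + R) * (Mt + R) \<le> Mt * Mt"
proof -
  have qt1: "t \<le> q + 1" using qt by simp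
  have Cpos: "1 \<le> q choose t" using qt by (simp add: Suc_leI)
  have npos: "1 \<le> (2*n)^t" using nq by simp
  have big: "\<And>Z. Z \<le> 10 * (2*n)^t * (q choose t) \<Longrightarrow> R * Z \<le> Mt"
  proof -
    fix Z assume "Z \<le> 10 * (2*n)^t * (q choose t)"
    then have "2^(q+1-t) * (n+1)^t * Z \<le> 2^(q+1-t) * (n+1)^t * (10 * (2*n)^t * (q choose t))"
      by (intro mult_le_mono2)
    then have "2^(q+1-t) * (n+1)^t * Z \<le> 3^(q+1-t)" using P1 by linarith
    then show "R * Z \<le> Mt" using RZ[OF nq qt1] R Mt by simp
  qed
  have Z1: "R * (2*n)^t \<le> Mt"
    by (rule big) (use Cpos in \<open>simp\<close>)
  have Z2: "R * (2 * (q choose t)) \<le> Mt"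
    by (rule big) (use npos in \<open>simp\<close>)
  have Z3: "R * 5 \<le> Mt"
    by (rule big) (use npos Cpos in \<open>simp add: mult_le_mono one_le_mult_iff\<close>)
  have m3: "3 \<le> n - 2*t" using nq by simp
  have MtS: "Mt = (2*(n - 2*t) - 1) * Mt1"
  proof -
    have "n - 2*t = Suc (n - (2*t+1))" using nq by simp
    then show ?thesis unfolding Mt Mt1 by (simp add: odd_dfact_Suc)
  qed
  have M0b: "M0 \<le> (2*n)^t * Mt"
  proof -
    have "M0 = odd_dfact ((n - 2*t) + t)" using M0 nq by (simp add: algebra_simps)
    also have "\<dots> \<le> (2*((n - 2*t) + t))^t * odd_dfact (n - 2*t)" by (rule odd_dfact_upper)
    also have "\<dots> \<le> (2*n)^t * Mt" unfolding Mt using nq by (intro mult_le_mono1 power_mono) auto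
    finally show ?thesis .
  qed
  show "R * M0 \<le> Mt * Mt"
  proof -
    have "R * M0 \<le> R * ((2*n)^t * Mt)" using M0b by (rule mult_le_mono2)
    also have "\<dots> = (R * (2*n)^t) * Mt" by (simp add: mult.assoc)
    also have "\<dots> \<le> Mt * Mt" using Z1 by (rule mult_le_mono1)
    finally show ?thesis .
  qed
  show "(((q + (q choose t) * q) choose (t+1)) * Mt1 + R) * ((q choose t) * Mt) \<le> Mt * Mt"
  proof -
    define C1 where "C1 = (q + (q choose t) * q) choose (t+1)"
    define C0 where "C0 = q choose t"
    have a: "2 * (C1 * C0 * Mt1) \<le> Mt"
    proof -
      have "2 * (C1 * C0) * Mt1 \<le> (2*(n - 2*t) - 1) * Mt1" using P2 unfolding C1_def C0_def
        by (intro mult_le_mono1) simp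
      then show ?thesis using MtS by (simp add: algebra_simps)
    qed
    have b: "2 * (R * C0) \<le> Mt" using Z2 unfolding C0_def by (simp add: algebra_simps)
    have "2 * ((C1 * Mt1 + R) * C0) \<le> 2 * Mt" using a b by (simp add: algebra_simps)
    then have "(C1 * Mt1 + R) * C0 \<le> Mt" by simp
    then have "((C1 * Mt1 + R) * C0) * Mt \<le> Mt * Mt" by (rule mult_le_mono1)
    then show ?thesis unfolding C1_def C0_def by (simp add: algebra_simps)
  qed
  have H3: "((n - 2*t) * Mt1 + R) * (Mt + R) \<le> Mt * Mt"
  proof -
    have x: "5 * ((n - 2*t) * Mt1) \<le> 3 * Mt"
    proof -
      have "5 * (n - 2*t) \<le> 3 * (2*(n - 2*t) - 1)" using m3 by simp
      then have "5 * (n - 2*t) * Mt1 \<le> 3 * (2*(n - 2*t) - 1) * Mt1" by (rule mult_le_mono1)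
      then show ?thesis using MtS by (simp add: algebra_simps)
    qed
    have r: "5 * R \<le> Mt" using Z3 by simp
    have "25 * (((n - 2*t) * Mt1 + R) * (Mt + R)) = (5 * ((n - 2*t) * Mt1) + 5 * R) * (5 * Mt + 5 * R)"
      by (simp add: algebra_simps)
    also have "\<dots> \<le> (3 * Mt + Mt) * (5 * Mt + Mt)"
    proof (rule mult_le_mono)
      show "5 * ((n - 2*t) * Mt1) + 5 * R \<le> 3 * Mt + Mt" using x r by linarith
      show "5 * Mt + 5 * R \<le> 5 * Mt + Mt" using r by linarith
    qed
    also have "\<dots> \<le> 25 * (Mt * Mt)" by simp
    finally show ?thesis by simp
  qed
  then show "((n - 2*t) * Mt1 + R) * (Mt + R) \<le> Mt * Mt" .
  have "Mt1 \<le> (n - 2*t) * Mt1" using m3 by simp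
  then have "(Mt1 + R) * (Mt + R) \<le> ((n - 2*t) * Mt1 + R) * (Mt + R)" by (intro mult_le_mono1) simp
  then show "(Mt1 + R) * (Mt + R) \<le> Mt * Mt" using H3 by linarith
qed

lemma exp_poly: "\<exists>k0. \<forall>k\<ge>k0. C * k^D * 2^k \<le> (3::nat)^k"
proof -
  have "((\<lambda>k::nat. real k ^ D / (3/2)^k) \<longlongrightarrow> 0) sequentially" by real_asymp
  moreover have "(0::real) < 1 / (real C + 1)" by simp
  ultimately have "eventually (\<lambda>k. real k ^ D / (3/2)^k < 1 / (real C + 1)) sequentially"
    by (rule order_tendstoD)
  then obtain k0 where k0: "\<And>k. k \<ge> k0 \<Longrightarrow> real k ^ D / (3/2)^k < 1 / (real C + 1)"
    by (auto simp: eventually_sequentially)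
  have "C * k^D * 2^k \<le> (3::nat)^k" if k: "k \<ge> k0" for k
  proof -
    have pos: "(0::real) < (3/2)^k" by simp
    have "real k ^ D / (3/2)^k < 1 / (real C + 1)" using k0[OF k] .
    then have "real k ^ D * (real C + 1) < (3/2)^k"
      using pos by (simp add: field_simps)
    then have "real k ^ D * (real C + 1) * 2^k < (3/2)^k * 2^k" by simp
    also have "(3/2::real)^k * 2^k = 3^k" by (simp add: power_mult_distrib[symmetric])
    finally have "real k ^ D * (real C + 1) * 2^k < 3^k" .
    moreover have "real C * real k ^ D * 2^k \<le> real k ^ D * (real C + 1) * 2^k"
      by (simp add: algebra_simps)
    ultimately have "real C * real k ^ D * 2^k < 3^k" by linarith
    then have "real (C * k^D * 2^k) < real (3^k)" by simp
    then show ?thesis by linarith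
  qed
  then show ?thesis by blast
qed

lemma choose_le_pow: "n choose k \<le> n^k"
  by (cases "k \<le> n") (simp_all add: binomial_le_pow binomial_eq_0)

lemma poly_bound:
  assumes qt: "t \<le> q"
  shows "2*(((q + (q choose t)*q) choose (t+1))*(q choose t)) + 4*t + 4*q + 5
          \<le> (2^(t+2) + 4*t + 9) * (q+1)^((t+1)*(t+1)+t)"
proof -
  define s where "s = q + 1"
  define D where "D = (t+1)*(t+1)+t"
  have s1: "1 \<le> s" unfolding s_def by simp
  have C0: "q choose t \<le> s^t"
    using choose_le_pow[of q t] power_mono[of q s t] unfolding s_def by simp
  have qs: "q \<le> s^t * s"
  proof -
    have "q \<le> s" unfolding s_def by simp
    also have "s \<le> s^(t+1)" using s1 by (simp add: self_le_power)
    finally show ?thesis by (simp add: mult.commute)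
  qed
  have "(q choose t) * q \<le> s^t * s" using C0 by (intro mult_le_mono) (simp_all add: s_def)
  then have u0: "q + (q choose t) * q \<le> 2 * (s^t * s)" using qs by linarith
  have u: "q + (q choose t) * q \<le> 2 * s^(t+1)" using u0 by (simp add: mult.commute)
  have C1: "(q + (q choose t)*q) choose (t+1) \<le> 2^(t+1) * s^((t+1)*(t+1))"
  proof -
    have "(q + (q choose t)*q) choose (t+1) \<le> (q + (q choose t)*q)^(t+1)" by (rule choose_le_pow)
    also have "\<dots> \<le> (2 * s^(t+1))^(t+1)" using u by (rule power_mono) simp
    also have "\<dots> = 2^(t+1) * s^((t+1)*(t+1))" by (simp only: power_mult_distrib power_mult)
    finally show ?thesis .
  qed
  have "2*(((q + (q choose t)*q) choose (t+1))*(q choose t)) \<le> 2*((2^(t+1) * s^((t+1)*(t+1))) * s^t)"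
    using C1 C0 by (intro mult_le_mono2 mult_le_mono) auto
  also have "\<dots> = 2^(t+2) * s^D" unfolding D_def by (simp add: power_add algebra_simps)
  finally have a: "2*(((q + (q choose t)*q) choose (t+1))*(q choose t)) \<le> 2^(t+2) * s^D" .
  have sD: "s \<le> s^D" "1 \<le> s^D" using s1 unfolding D_def by (simp_all add: self_le_power)
  have b: "4*t + 4*q + 5 \<le> (4*t+9) * s^D"
  proof -
    have "4*t + 4*q + 5 = 4*t + 4*s + 1" unfolding s_def by simp
    also have "\<dots> \<le> 4*t*s^D + 4*s^D + s^D" using sD by (intro add_le_mono) simp_all
    also have "\<dots> \<le> (4*t+9) * s^D" by (simp add: algebra_simps)
    finally show ?thesis .
  qed
  show ?thesis using a b unfolding s_def D_def by (simp add: algebra_simps)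
qed

lemma params: "\<exists>n0. \<forall>n\<ge>n0. \<exists>q. t \<le> q \<and> 4*t + 4*q + 5 \<le> n \<and>
    2^(q+1-t) * (n+1)^t * (10 * (2*n)^t * (q choose t)) \<le> 3^(q+1-t) \<and>
    2 * (((q + (q choose t) * q) choose (t+1)) * (q choose t)) \<le> 2*(n - 2*t) - 1"
proof -
  define D where "D = (t+1)*(t+1)+t"
  define c where "c = 2^(t+2) + 4*t + 9"
  define h where "h s = c * s^D" for s :: nat
  define D' where "D' = 3*t*D"
  define C' where "C' = 2 * (10 * 4^(3*t) * c^(3*t) * (t+1)^D')"
  obtain k0 where k0: "\<forall>k\<ge>k0. C' * k^D' * 2^k \<le> (3::nat)^k" using exp_poly by blast
  define n0 where "n0 = h (k0 + t) + 4*t + 1"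
  have hmono: "\<And>s s'. s \<le> s' \<Longrightarrow> h s \<le> h s'" unfolding h_def by (intro mult_le_mono2 power_mono) auto
  have c1: "1 \<le> c" unfolding c_def by simp
  have "\<exists>q. t \<le> q \<and> 4*t + 4*q + 5 \<le> n \<and>
    2^(q+1-t) * (n+1)^t * (10 * (2*n)^t * (q choose t)) \<le> 3^(q+1-t) \<and>
    2 * (((q + (q choose t) * q) choose (t+1)) * (q choose t)) \<le> 2*(n - 2*t) - 1" if n: "n \<ge> n0" for n
  proof -
    define f where "f = 10 * (2*n+2)^(3*t)"
    have "\<exists>k1. \<forall>k\<ge>k1. f * k^0 * 2^k \<le> (3::nat)^k" by (rule exp_poly)
    then have ex: "\<exists>k. 2^k * f \<le> (3::nat)^k" by (auto simp: mult.commute)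
    define k where "k = (LEAST k. 2^k * f \<le> (3::nat)^k)"
    have kP: "2^k * f \<le> 3^k" unfolding k_def using ex by (rule LeastI_ex)
    have f10: "10 \<le> f" unfolding f_def by simp
    have k1: "1 \<le> k"
    proof (rule ccontr)
      assume "\<not> 1 \<le> k"
      then have "k = 0" by simp
      then show False using kP f10 by simp
    qed
    have kmin: "\<not> 2^(k-1) * f \<le> (3::nat)^(k-1)"
      unfolding k_def by (rule not_less_Least) (use k1 k_def in simp)
    define q where "q = k + t - 1"
    have qt: "t \<le> q" and qk: "q + 1 - t = k" and sq: "q + 1 = k + t" unfolding q_def using k1 by auto
    define g0 where "g0 = 2*(((q + (q choose t)*q) choose (t+1))*(q choose t)) + 4*t + 4*q + 5"
    have "g0 \<le> h (q + 1)" unfolding g0_def h_def c_def D_def by (rule poly_bound[OF qt])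
    then have g0h: "g0 \<le> h (k + t)" using sq by simp
    have hn: "h (k + t) \<le> n"
    proof (cases "k < k0")
      case True
      then have "h (k + t) \<le> h (k0 + t)" by (intro hmono) simp
      then show ?thesis using n unfolding n0_def by simp
    next
      case False
      then have kk0: "k \<ge> k0" by simp
      show ?thesis
      proof (rule ccontr)
        assume "\<not> h (k + t) \<le> n"
        then have nh: "n < h (k + t)" by simp
        have h1: "1 \<le> h (k+t)" unfolding h_def using c1 k1 by (simp add: one_le_mult_iff)
        have "2*n+2 \<le> 4 * h (k+t)" using nh h1 by simp
        then have "f \<le> 10 * (4 * h (k+t))^(3*t)" unfolding f_def by (intro mult_le_mono2 power_mono) simp_all
        also have "\<dots> = 10 * 4^(3*t) * c^(3*t) * (k+t)^D'"
          unfolding h_def D'_def by (simp add: power_mult_distrib power_mult[symmetric] mult.commute mult.left_commute)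
        also have "\<dots> \<le> 10 * 4^(3*t) * c^(3*t) * ((t+1)*k)^D'"
        proof -
          have "k + t \<le> (t+1)*k" using k1 by (simp add: algebra_simps)
          then show ?thesis by (intro mult_le_mono2 power_mono) simp_all
        qed
        also have "\<dots> = 10 * 4^(3*t) * c^(3*t) * (t+1)^D' * k^D'" by (simp only: power_mult_distrib mult.assoc)
        finally have "2 * f \<le> C' * k^D'" unfolding C'_def by (simp add: algebra_simps)
        have "(3::nat)^k = 3 * 3^(k-1)" using k1 by (metis Suc_diff_1 less_le_trans zero_less_one power_Suc)
        also have "\<dots> < 3 * (2^(k-1) * f)" using kmin by simp
        also have "\<dots> \<le> 2^k * (2 * f)"
        proof -
          have e: "(2::nat)^k = 2 * 2^(k-1)" using k1 by (metis Suc_diff_1 less_le_trans zero_less_one power_Suc)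
          show ?thesis unfolding e by simp
        qed
        also have "\<dots> \<le> 2^k * (C' * k^D')" using \<open>2 * f \<le> C' * k^D'\<close> by (rule mult_le_mono2)
        also have "\<dots> = C' * k^D' * 2^k" by simp
        also have "\<dots> \<le> 3^k" using k0 kk0 by blast
        finally show False by simp
      qed
    qed
    have gn: "g0 \<le> n" using g0h hn by linarith
    have n4: "4*t + 1 \<le> n" using n unfolding n0_def by simp
    have qn: "q \<le> n" using gn unfolding g0_def by simp
    have A1: "4*t + 4*q + 5 \<le> n" using gn unfolding g0_def by simp
    have A2: "2 * (((q + (q choose t) * q) choose (t+1)) * (q choose t)) \<le> 2*(n - 2*t) - 1"
      using gn n4 unfolding g0_def by simp
    have A3: "2^(q+1-t) * (n+1)^t * (10 * (2*n)^t * (q choose t)) \<le> 3^(q+1-t)"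
    proof -
      have Cq: "q choose t \<le> (2*n+2)^t"
      proof -
        have "q choose t \<le> q^t" by (rule choose_le_pow)
        also have "\<dots> \<le> (2*n+2)^t" using qn by (intro power_mono) simp_all
        finally show ?thesis .
      qed
      have "(n+1)^t * (10 * (2*n)^t * (q choose t)) \<le> (2*n+2)^t * (10 * (2*n+2)^t * (2*n+2)^t)"
        using Cq by (intro mult_le_mono power_mono) simp_all
      also have "\<dots> = f" unfolding f_def by (simp add: power_add[symmetric] algebra_simps mult_2)
      finally have X: "(n+1)^t * (10 * (2*n)^t * (q choose t)) \<le> f" .
      have "2^k * ((n+1)^t * (10 * (2*n)^t * (q choose t))) \<le> 2^k * f" using X by (rule mult_le_mono2)
      then have "2^k * ((n+1)^t * (10 * (2*n)^t * (q choose t))) \<le> 3^k" using kP by (rule le_trans)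
      then show ?thesis unfolding qk by (simp only: mult.assoc)
    qed
    show ?thesis using qt A1 A2 A3 by blast
  qed
  then show ?thesis by blast
qed

lemma Tstar_eq: "Tstar t = (\<lambda>i. {2*i-1, 2*i}) ` {1..t}"
  unfolding Tstar_def by blast

lemma Tstar_card: "card (Tstar t) = t" and Tstar_finite: "finite (Tstar t)"
proof -
  have "inj_on (\<lambda>i::nat. {2*i-1, 2*i}) {1..t}"
  proof (rule inj_onI)
    fix i j :: nat assume i: "i \<in> {1..t}" and j: "j \<in> {1..t}" and e: "{2*i-1, 2*i} = {2*j-1, 2*j}"
    then have "2*i \<in> {2*j-1, 2*j}" by blast
    then have "2*i = 2*j-1 \<or> 2*i = 2*j" by blast
    then show "i = j" using j by auto
  qed
  then show "card (Tstar t) = t" unfolding Tstar_eq by (simp add: card_image)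
  show "finite (Tstar t)" unfolding Tstar_eq by simp
qed

lemma Tstar_cover: "v \<in> {1..2*t} \<Longrightarrow> \<exists>f\<in>Tstar t. v \<in> f"
proof -
  assume v: "v \<in> {1..2*t}"
  define i where "i = (v + 1) div 2"
  have i: "i \<in> {1..t}" using v unfolding i_def by auto
  have "v = 2*i - 1 \<or> v = 2*i" unfolding i_def by presburger
  then have "v \<in> {2*i-1, 2*i}" by blast
  then show ?thesis unfolding Tstar_eq using i by blast
qed

theorem mainTheorem19:
  shows "\<forall>t::nat. \<exists>n0::nat. \<forall>n\<ge>n0. \<forall>F T.
    F \<subseteq> perfect_matchings n \<and> t_intersecting t F \<and>
    T \<subseteq> edges_K n \<and> card T = t \<and> pairwise_disjoint_edges T \<and>
    T \<inter> Tstar t = {} \<and>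
    (\<forall>i\<in>{1..t}. card (verts T \<inter> {2*i-1, 2*i}) \<ge> 1) \<and>
    T \<subseteq> Delta n {1..2*t}
    \<longrightarrow> card (restrict_fam F (Tstar t)) * card (restrict_fam F T) \<le> (odd_dfact (n - 2*t))^2"
proof (intro allI)
  fix t :: nat
  obtain n0 where n0: "\<forall>n\<ge>n0. \<exists>q. t \<le> q \<and> 4*t + 4*q + 5 \<le> n \<and>
    2^(q+1-t) * (n+1)^t * (10 * (2*n)^t * (q choose t)) \<le> 3^(q+1-t) \<and>
    2 * (((q + (q choose t) * q) choose (t+1)) * (q choose t)) \<le> 2*(n - 2*t) - 1"
    using params by blast
  show "\<exists>n0::nat. \<forall>n\<ge>n0. \<forall>F T.
    F \<subseteq> perfect_matchings n \<and> t_intersecting t F \<and>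
    T \<subseteq> edges_K n \<and> card T = t \<and> pairwise_disjoint_edges T \<and>
    T \<inter> Tstar t = {} \<and>
    (\<forall>i\<in>{1..t}. card (verts T \<inter> {2*i-1, 2*i}) \<ge> 1) \<and>
    T \<subseteq> Delta n {1..2*t}
    \<longrightarrow> card (restrict_fam F (Tstar t)) * card (restrict_fam F T) \<le> (odd_dfact (n - 2*t))^2"
  proof (intro exI[of _ n0] allI impI)
    fix n F T
    assume n: "n0 \<le> n"
    assume hyp: "F \<subseteq> perfect_matchings n \<and> t_intersecting t F \<and>
      T \<subseteq> edges_K n \<and> card T = t \<and> pairwise_disjoint_edges T \<and>
      T \<inter> Tstar t = {} \<and>
      (\<forall>i\<in>{1..t}. card (verts T \<inter> {2*i-1, 2*i}) \<ge> 1) \<and>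
      T \<subseteq> Delta n {1..2*t}"
    then have FP: "F \<subseteq> perfect_matchings n" and ti: "t_intersecting t F"
      and TE: "T \<subseteq> edges_K n" and cT: "card T = t" and TT: "T \<inter> Tstar t = {}"
      and hit: "\<forall>i\<in>{1..t}. card (verts T \<inter> {2*i-1, 2*i}) \<ge> 1"
      and TD: "T \<subseteq> Delta n {1..2*t}" by blast+
    obtain q where q: "t \<le> q" "4*t + 4*q + 5 \<le> n"
      "2^(q+1-t) * (n+1)^t * (10 * (2*n)^t * (q choose t)) \<le> 3^(q+1-t)"
      "2 * (((q + (q choose t) * q) choose (t+1)) * (q choose t)) \<le> 2*(n - 2*t) - 1"
      using n0 n by blast
    define A where "A = restrict_fam F (Tstar t)"
    define B where "B = restrict_fam F T"
    have hA: "A \<subseteq> {m \<in> perfect_matchings n. Tstar t \<subseteq> m}"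
      unfolding A_def restrict_fam_def using FP by blast
    have hB: "B \<subseteq> {m \<in> perfect_matchings n. T \<subseteq> m}"
      unfolding B_def restrict_fam_def using FP by blast
    have finT: "finite T" using TE finite_edges_K by (rule finite_subset)
    have cross: "\<forall>a\<in>A. \<forall>b\<in>B. t \<le> card (a \<inter> b)"
      using ti unfolding A_def B_def restrict_fam_def t_intersecting_def by blast
    have BP: "\<forall>b\<in>B. b \<inter> Tstar t = {}"
    proof (intro ballI equalityI subsetI)
      fix b f assume b: "b \<in> B" and f: "f \<in> b \<inter> Tstar t"
      have bPM: "b \<in> perfect_matchings n" "T \<subseteq> b" using b hB by blast+
      obtain i where i: "i \<in> {1..t}" "f = {2*i-1, 2*i}" using f unfolding Tstar_def by blast
      have "card (verts T \<inter> f) \<ge> 1" using hit i by blast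
      then have "verts T \<inter> f \<noteq> {}" by (metis card.empty not_one_le_zero)
      then obtain v e where v: "v \<in> f" "e \<in> T" "v \<in> e" unfolding verts_def by blast
      have "e = f" using PM_D(2)[OF bPM(1), of e f] bPM(2) v f by blast
      then show "f \<in> {}" using v TT f by blast
    qed simp
    have AQ: "\<forall>a\<in>A. a \<inter> T = {}"
    proof (intro ballI equalityI subsetI)
      fix a e assume a: "a \<in> A" and e: "e \<in> a \<inter> T"
      have aPM: "a \<in> perfect_matchings n" "Tstar t \<subseteq> a" using a hA by blast+
      have "e \<inter> {1..2*t} \<noteq> {}" using e TD unfolding Delta_def by blast
      then obtain v where v: "v \<in> e" "v \<in> {1..2*t}" by blast
      obtain f where f: "f \<in> Tstar t" "v \<in> f" using Tstar_cover[OF v(2)] by blast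
      have "e = f" using PM_D(2)[OF aPM(1), of e f] aPM(2) v f e by blast
      then show "e \<in> {}" using e f TT by blast
    qed simp
    have qn: "q \<le> n" using q(2) by simp
    define R where "R = (n+1)^(q+1) * odd_dfact (n - (t + q + 1))"
    define Mt where "Mt = odd_dfact (n - 2*t)"
    define Mt1 where "Mt1 = odd_dfact (n - (2*t+1))"
    define M0 where "M0 = odd_dfact (n - t)"
    note ar = arith[OF q(1) q(2) q(3) q(4) R_def Mt_def Mt1_def M0_def]
    have "card A * card B \<le> Mt * Mt"
      by (rule main_comb[OF hA hB Tstar_finite finT Tstar_card cT cross BP AQ qn R_def Mt_def Mt1_def M0_def
            ar(1) ar(2) ar(3) ar(4)])
    then show "card (restrict_fam F (Tstar t)) * card (restrict_fam F T) \<le> (odd_dfact (n - 2*t))^2"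
      unfolding A_def B_def Mt_def by (simp add: power2_eq_square)
  qed
qed

end
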